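(* Let $f:\mathbb{Z}\to\mathbb{R}$ be a function of bounded variation, i.e. $\mathrm{Var}(f)=\sum_{n\in\mathbb{Z}}|f(n+1)-f(n)|<\infty$. Then $$\mathrm{Var}(\widetilde{M}f)\le \mathrm{Var}(f),$$ and the constant $1$ is best possible: there is no constant $C<1$ such that $\mathrm{Var}(\widetilde{M}f)\le C\,\mathrm{Var}(f)$ holds for all functions $f:\mathbb{Z}\to\mathbb{R}$ of bounded variation.
   Context: Let $\mathbb{Z}^+=\{0,1,2,\dots\}$. For $f:\mathbb{Z}\to\mathbb{R}$, the discrete non-centered Hardy–Littlewood maximal operator is $$\widetilde{M}f(n)=\sup_{r,s\in\mathbb{Z}^+}\frac{1}{r+s+1}\sum_{k=-r}^{s}|f(n+k)|,\qquad n\in\mathbb{Z}.$$ The total variation of $g:\mathbb{Z}\to\mathbb{R}$ is $\mathrm{Var}(g)=\sum_{n=-\infty}^{\infty}|g(n+1)-g(n)|$. *)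

theory Defs
  imports "HOL-Analysis.Analysis"
begin

definition ncmax :: "(int \<Rightarrow> real) \<Rightarrow> int \<Rightarrow> real" where
  "ncmax f n = (SUP rs \<in> (UNIV :: (nat \<times> nat) set).
      (\<Sum>k = - int (fst rs) .. int (snd rs). \<bar>f (n + k)\<bar>) / real (fst rs + snd rs + 1))"

definition Var :: "(int \<Rightarrow> real) \<Rightarrow> ennreal" where
  "Var g = (\<integral>\<^sup>+ n. ennreal \<bar>g (n + 1) - g n\<bar> \<partial>count_space UNIV)"

end

theory Submission imports Defs "HOL-Analysis.Analysis" begin

definition VV :: "(int \<Rightarrow> real) \<Rightarrow> int \<Rightarrow> int \<Rightarrow> real" where
  "VV \<phi> x y = (\<Sum>n\<in>{x..<y}. \<bar>\<phi> (n+1) - \<phi> n\<bar>)"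

lemma VV_nonneg: "0 \<le> VV \<phi> x y"
  unfolding VV_def by (auto intro: sum_nonneg)

lemma VV_concat: "x \<le> m \<Longrightarrow> m \<le> y \<Longrightarrow> VV \<phi> x m + VV \<phi> m y = VV \<phi> x y"
proof -
  assume a: "x \<le> m" "m \<le> y"
  have "{x..<y} = {x..<m} \<union> {m..<y}" using a by auto
  thus ?thesis unfolding VV_def by (simp add: sum.union_disjoint ivl_disj_int)
qed

lemma VV_Suc: "x \<le> y \<Longrightarrow> VV \<phi> x (y+1) = VV \<phi> x y + \<bar>\<phi> (y+1) - \<phi> y\<bar>"
proof -
  assume "x \<le> y"
  have "{x..<y+1} = insert y {x..<y}" using \<open>x \<le> y\<close> by auto
  thus ?thesis unfolding VV_def by simp
qed

lemma VV_tele: "x \<le> y \<Longrightarrow> \<bar>\<phi> y - \<phi> x\<bar> \<le> VV \<phi> x y"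
proof -
  assume "x \<le> y"
  then obtain k where k: "y = x + int k" by (metis zle_iff_zadd)
  have "\<bar>\<phi> (x + int k) - \<phi> x\<bar> \<le> VV \<phi> x (x + int k)"
  proof (induction k)
    case 0 then show ?case by (simp add: VV_def)
  next
    case (Suc k)
    define z where "z = x + int k"
    have e: "x + int (Suc k) = z + 1" unfolding z_def by simp
    have "x \<le> z" unfolding z_def by simp
    have "VV \<phi> x (z + 1) = VV \<phi> x z + \<bar>\<phi> (z + 1) - \<phi> z\<bar>"
      using VV_Suc[OF \<open>x \<le> z\<close>] .
    moreover have "\<bar>\<phi> z - \<phi> x\<bar> \<le> VV \<phi> x z" using Suc unfolding z_def .
    ultimately show ?case unfolding e by linarith
  qed
  thus ?thesis using k by simp
qed

definition avg :: "(int \<Rightarrow> real) \<Rightarrow> int \<Rightarrow> int \<Rightarrow> real" where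
  "avg f lo hi = (\<Sum>k=lo..hi. \<bar>f k\<bar>) / real_of_int (hi - lo + 1)"

lemma avg_le:
  assumes "lo \<le> hi" "\<And>k. lo \<le> k \<Longrightarrow> k \<le> hi \<Longrightarrow> \<bar>f k\<bar> \<le> c"
  shows "avg f lo hi \<le> c"
proof -
  have "(\<Sum>k=lo..hi. \<bar>f k\<bar>) \<le> of_nat (card {lo..hi}) * c"
    by (rule sum_bounded_above) (use assms in auto)
  also have "of_nat (card {lo..hi}) = real_of_int (hi - lo + 1)" using assms(1) by simp
  finally show ?thesis unfolding avg_def using assms(1) by (simp add: divide_le_eq mult.commute)
qed

lemma avg_self: "avg f n n = \<bar>f n\<bar>" unfolding avg_def by simp

lemma ncmax_term:
  "(\<Sum>k = - int r .. int s. \<bar>f (n + k)\<bar>) / real (r + s + 1) = avg f (n - int r) (n + int s)"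
proof -
  have "(\<Sum>k = - int r .. int s. \<bar>f (n + k)\<bar>) = (\<Sum>k \<in> (+) n ` {- int r .. int s}. \<bar>f k\<bar>)"
    by (subst sum.reindex) (auto simp: inj_on_def)
  also have "(+) n ` {- int r .. int s} = {n - int r .. n + int s}"
    by (simp add: image_add_atLeastAtMost add.commute)
  finally show ?thesis unfolding avg_def by simp
qed


context
  fixes f :: "int \<Rightarrow> real" and TV :: real
  assumes VVb: "\<And>x y. VV f x y \<le> TV"
begin

lemma TV_nonneg: "0 \<le> TV" using VVb[of 0 0] VV_nonneg[of f 0 0] by linarith

lemma fbound: "\<bar>f k\<bar> \<le> \<bar>f 0\<bar> + TV"
proof (cases "0 \<le> k")
  case True
  then have "\<bar>f k - f 0\<bar> \<le> TV" using VV_tele[OF True, of f] VVb[of 0 k] by linarith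
  then show ?thesis by linarith
next
  case False
  then have "\<bar>f 0 - f k\<bar> \<le> TV" using VV_tele[of k 0 f] VVb[of k 0] by linarith
  then show ?thesis by linarith
qed

lemma avg_bound: "avg f lo hi \<le> \<bar>f 0\<bar> + TV"
proof (cases "lo \<le> hi")
  case True then show ?thesis by (intro avg_le) (auto intro: fbound)
next
  case False then show ?thesis unfolding avg_def using TV_nonneg by simp
qed

lemma bddA: "bdd_above (range (\<lambda>rs::nat\<times>nat. (\<Sum>k = - int (fst rs) .. int (snd rs). \<bar>f (n + k)\<bar>) / real (fst rs + snd rs + 1)))"
  unfolding ncmax_term by (rule bdd_aboveI2[where M="\<bar>f 0\<bar> + TV"]) (rule avg_bound)

lemma G1: "lo \<le> n \<Longrightarrow> n \<le> hi \<Longrightarrow> avg f lo hi \<le> ncmax f n"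
proof -
  assume a: "lo \<le> n" "n \<le> hi"
  let ?F = "\<lambda>rs::nat\<times>nat. (\<Sum>k = - int (fst rs) .. int (snd rs). \<bar>f (n + k)\<bar>) / real (fst rs + snd rs + 1)"
  have "avg f lo hi = ?F (nat (n - lo), nat (hi - n))"
    using ncmax_term[where r="nat (n - lo)" and s="nat (hi - n)" and f=f and n=n] a by simp
  also have "\<dots> \<le> ncmax f n"
    unfolding ncmax_def by (rule cSUP_upper[OF UNIV_I bddA])
  finally show ?thesis .
qed

lemma G2: "(\<And>lo hi. lo \<le> n \<Longrightarrow> n \<le> hi \<Longrightarrow> avg f lo hi \<le> c) \<Longrightarrow> ncmax f n \<le> c"
  unfolding ncmax_def
proof (rule cSUP_least)
  fix rs :: "nat \<times> nat"
  assume H: "\<And>lo hi. lo \<le> n \<Longrightarrow> n \<le> hi \<Longrightarrow> avg f lo hi \<le> c"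
  obtain r s where rs: "rs = (r, s)" by fastforce
  show "(\<Sum>k = - int (fst rs) .. int (snd rs). \<bar>f (n + k)\<bar>) / real (fst rs + snd rs + 1) \<le> c"
    unfolding rs fst_conv snd_conv ncmax_term by (rule H) auto
qed auto

lemma G3: "\<bar>f n\<bar> \<le> ncmax f n"
  using G1[of n n n] by (simp add: avg_self)

definition L :: "int \<Rightarrow> real" where "L q = (SUP x\<in>{..q}. VV f x q)"
definition R :: "int \<Rightarrow> real" where "R q = (SUP y\<in>{q..}. VV f q y)"

lemma L_ge: "x \<le> q \<Longrightarrow> VV f x q \<le> L q"
  unfolding L_def by (rule cSUP_upper) (auto intro!: bdd_aboveI2 VVb)

lemma R_ge: "q \<le> y \<Longrightarrow> VV f q y \<le> R q"
  unfolding R_def by (rule cSUP_upper) (auto intro!: bdd_aboveI2 VVb)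

lemma L_super: "m \<le> p \<Longrightarrow> L m + VV f m p \<le> L p"
proof -
  assume mp: "m \<le> p"
  have "L m \<le> L p - VV f m p"
    unfolding L_def[of m]
  proof (rule cSUP_least)
    fix x assume "x \<in> {..m}"
    then have "VV f x m + VV f m p = VV f x p" using mp by (intro VV_concat) auto
    moreover have "VV f x p \<le> L p" using \<open>x \<in> {..m}\<close> mp by (intro L_ge) auto
    ultimately show "VV f x m \<le> L p - VV f m p" by linarith
  qed auto
  then show ?thesis by linarith
qed

lemma LR: "L m + R m \<le> TV"
proof -
  have "L m \<le> TV - R m"
    unfolding L_def[of m]
  proof (rule cSUP_least)
    fix x assume x: "x \<in> {..m}"
    have "R m \<le> TV - VV f x m"
      unfolding R_def
    proof (rule cSUP_least)
      fix y assume "y \<in> {m..}"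
      then have "VV f x m + VV f m y = VV f x y" using x by (intro VV_concat) auto
      then show "VV f m y \<le> TV - VV f x m" using VVb[of x y] by linarith
    qed auto
    then show "VV f x m \<le> TV - R m" by linarith
  qed auto
  then show ?thesis by linarith
qed

lemma L_nonneg: "0 \<le> L q" using L_ge[of q q] by (simp add: VV_def)
lemma R_nonneg: "0 \<le> R q" using R_ge[of q q] by (simp add: VV_def)

lemma absdiff: "x \<le> y \<Longrightarrow> \<bar>f y\<bar> \<le> \<bar>f x\<bar> + VV f x y"
  "x \<le> y \<Longrightarrow> \<bar>f x\<bar> \<le> \<bar>f y\<bar> + VV f x y"
  using VV_tele[of x y f] by linarith+

lemma LT: "a \<le> q \<Longrightarrow> ncmax f a \<le> ncmax f q + L q"
proof -
  assume aq: "a \<le> q"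
  show ?thesis
  proof (rule G2)
    fix lo hi assume lh: "lo \<le> a" "a \<le> hi"
    show "avg f lo hi \<le> ncmax f q + L q"
    proof (cases "q \<le> hi")
      case True
      then have "avg f lo hi \<le> ncmax f q" using lh aq by (intro G1) auto
      then show ?thesis using L_nonneg[of q] by linarith
    next
      case False
      show ?thesis
      proof (rule avg_le)
        show "lo \<le> hi" using lh by simp
        fix k assume "lo \<le> k" "k \<le> hi"
        then have kq: "k \<le> q" using False by simp
        have "\<bar>f k\<bar> \<le> \<bar>f q\<bar> + VV f k q" using absdiff(2)[OF kq] .
        also have "\<dots> \<le> ncmax f q + L q" using G3[of q] L_ge[OF kq] by linarith
        finally show "\<bar>f k\<bar> \<le> ncmax f q + L q" .
      qed
    qed
  qed
qed

lemma RT: "m \<le> b \<Longrightarrow> ncmax f b \<le> ncmax f m + R m"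
proof -
  assume mb: "m \<le> b"
  show ?thesis
  proof (rule G2)
    fix lo hi assume lh: "lo \<le> b" "b \<le> hi"
    show "avg f lo hi \<le> ncmax f m + R m"
    proof (cases "lo \<le> m")
      case True
      then have "avg f lo hi \<le> ncmax f m" using lh mb by (intro G1) auto
      then show ?thesis using R_nonneg[of m] by linarith
    next
      case False
      show ?thesis
      proof (rule avg_le)
        show "lo \<le> hi" using lh by simp
        fix k assume "lo \<le> k" "k \<le> hi"
        then have mk: "m \<le> k" using False by simp
        have "\<bar>f k\<bar> \<le> \<bar>f m\<bar> + VV f m k" using absdiff(1)[OF mk] .
        also have "\<dots> \<le> ncmax f m + R m" using G3[of m] R_ge[OF mk] by linarith
        finally show "\<bar>f k\<bar> \<le> ncmax f m + R m" .
      qed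
    qed
  qed
qed


lemma PK0:
  assumes cd: "c \<le> d" and gt: "\<And>n. n \<in> {c..d} \<Longrightarrow> \<bar>f n\<bar> < ncmax f n"
  shows "\<And>n. n \<in> {c..d} \<Longrightarrow> ncmax f n \<le> max (ncmax f (c-1)) (ncmax f (d+1))"
proof -
  define G where "G = Max (ncmax f ` {c..d})"
  define \<delta> where "\<delta> = Min ((\<lambda>n. ncmax f n - \<bar>f n\<bar>) ` {c..d})"
  define Bd where "Bd = max (ncmax f (c-1)) (ncmax f (d+1))"
  have ne: "{c..d} \<noteq> {}" using cd by simp
  have dpos: "0 < \<delta>" unfolding \<delta>_def using ne gt by (subst Min_gr_iff) auto
  have Gge: "\<And>n. n \<in> {c..d} \<Longrightarrow> ncmax f n \<le> G" unfolding G_def by (rule Max_ge) auto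
  have dle: "\<And>n. n \<in> {c..d} \<Longrightarrow> \<delta> \<le> ncmax f n - \<bar>f n\<bar>" unfolding \<delta>_def by (rule Min_le) auto
  have hle: "ncmax f n \<le> max (G - \<delta>) Bd" if n: "n \<in> {c..d}" for n
  proof (rule G2)
    fix lo hi assume lh: "lo \<le> n" "n \<le> hi"
    show "avg f lo hi \<le> max (G - \<delta>) Bd"
    proof (cases "lo < c")
      case True
      then have "avg f lo hi \<le> ncmax f (c-1)" using lh n by (intro G1) auto
      then show ?thesis unfolding Bd_def by linarith
    next
      case F1: False
      show ?thesis
      proof (cases "d < hi")
        case True
        then have "avg f lo hi \<le> ncmax f (d+1)" using lh n by (intro G1) auto
        then show ?thesis unfolding Bd_def by linarith
      next
        case False
        have "avg f lo hi \<le> G - \<delta>"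
        proof (rule avg_le)
          show "lo \<le> hi" using lh by simp
          fix k assume "lo \<le> k" "k \<le> hi"
          then have "k \<in> {c..d}" using F1 False by auto
          then show "\<bar>f k\<bar> \<le> G - \<delta>" using dle Gge by fastforce
        qed
        then show ?thesis by linarith
      qed
    qed
  qed
  have "G \<in> ncmax f ` {c..d}" unfolding G_def using ne by (intro Max_in) auto
  then obtain n0 where n0: "n0 \<in> {c..d}" "ncmax f n0 = G" by blast
  have "G \<le> Bd" using hle[OF n0(1)] n0(2) dpos by linarith
  then show "\<And>n. n \<in> {c..d} \<Longrightarrow> ncmax f n \<le> max (ncmax f (c-1)) (ncmax f (d+1))"
    using Gge unfolding Bd_def by fastforce
qed

lemma PK:
  "c \<le> n \<Longrightarrow> n \<le> d \<Longrightarrow> ncmax f (c-1) < ncmax f n \<Longrightarrow> ncmax f (d+1) < ncmax f n \<Longrightarrow>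
   \<exists>p\<in>{c..d}. ncmax f n \<le> ncmax f p \<and> ncmax f p = \<bar>f p\<bar>"
proof (induction "nat (d - c)" arbitrary: c d n rule: less_induct)
  case less
  show ?case
  proof (cases "\<exists>z\<in>{c..d}. ncmax f z = \<bar>f z\<bar>")
    case False
    then have gt: "\<And>z. z \<in> {c..d} \<Longrightarrow> \<bar>f z\<bar> < ncmax f z" using G3 by (metis order_le_less)
    have "ncmax f n \<le> max (ncmax f (c-1)) (ncmax f (d+1))"
      by (rule PK0[where c=c and d=d]) (use gt less.prems in auto)
    with less.prems show ?thesis by auto
  next
    case True
    then obtain z where z: "z \<in> {c..d}" "ncmax f z = \<bar>f z\<bar>" by blast
    show ?thesis
    proof (cases "ncmax f n \<le> ncmax f z")
      case True then show ?thesis using z by blast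
    next
      case False
      then have zn: "z \<noteq> n" by auto
      show ?thesis
      proof (cases "z < n")
        case True
        have "\<exists>p\<in>{z+1..d}. ncmax f n \<le> ncmax f p \<and> ncmax f p = \<bar>f p\<bar>"
          using True False less.prems z by (intro less.hyps[of d "z+1"]) auto
        then show ?thesis using z by auto
      next
        case F2: False
        have "\<exists>p\<in>{c..z-1}. ncmax f n \<le> ncmax f p \<and> ncmax f p = \<bar>f p\<bar>"
          using F2 zn False less.prems z by (intro less.hyps[of "z-1" c]) auto
        then show ?thesis using z by auto
      qed
    qed
  qed
qed

definition Inv :: "int \<Rightarrow> int \<Rightarrow> bool" where
  "Inv a b \<longleftrightarrow> (\<exists>K. VV (ncmax f) a b \<le> K - ncmax f b \<and> (\<forall>q\<ge>b. K \<le> L q + ncmax f q))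
     \<or> (\<exists>m. m < b \<and> ncmax f m < ncmax f b \<and> VV (ncmax f) a b \<le> L m + ncmax f b - ncmax f m)"

lemma Inv_step:
  assumes ab: "a \<le> b" and I: "Inv a b" shows "Inv a (b+1)"
proof -
  let ?g = "ncmax f"
  have W: "VV ?g a (b+1) = VV ?g a b + \<bar>?g (b+1) - ?g b\<bar>" using VV_Suc[OF ab] .
  from I consider (D) K where "VV ?g a b \<le> K - ?g b" "\<forall>q\<ge>b. K \<le> L q + ?g q"
    | (U) m where "m < b" "?g m < ?g b" "VV ?g a b \<le> L m + ?g b - ?g m"
    unfolding Inv_def by blast
  then show ?thesis
  proof cases
    case D
    show ?thesis
    proof (cases "?g (b+1) \<le> ?g b")
      case True
      have "VV ?g a (b+1) \<le> K - ?g (b+1)" using W D True by linarith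
      then show ?thesis unfolding Inv_def using D(2) by auto
    next
      case False
      have "K \<le> L b + ?g b" using D(2) by auto
      then have "VV ?g a (b+1) \<le> L b + ?g (b+1) - ?g b" using W D False by linarith
      then show ?thesis unfolding Inv_def using False by (intro disjI2 exI[of _ b]) auto
    qed
  next
    case U
    show ?thesis
    proof (cases "?g b \<le> ?g (b+1)")
      case True
      have "VV ?g a (b+1) \<le> L m + ?g (b+1) - ?g m" using W U True by linarith
      then show ?thesis unfolding Inv_def using U True by (intro disjI2 exI[of _ m]) auto
    next
      case False
      obtain p where p: "p \<in> {m+1..b}" "?g b \<le> ?g p" "?g p = \<bar>f p\<bar>"
        using PK[of "m+1" b b] U False by auto
      have mp: "m \<le> p" using p by auto
      have "L m + VV f m p \<le> L p" using L_super[OF mp] .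
      moreover have "\<bar>f p\<bar> \<le> \<bar>f m\<bar> + VV f m p" using absdiff(1)[OF mp] .
      moreover have "\<bar>f m\<bar> \<le> ?g m" by (rule G3)
      ultimately have "VV ?g a (b+1) \<le> (L p + ?g p) - ?g (b+1)" using W U False p by linarith
      moreover have "\<forall>q\<ge>b+1. L p + ?g p \<le> L q + ?g q"
      proof (intro allI impI)
        fix q assume "b + 1 \<le> q"
        then have pq: "p \<le> q" using p by auto
        have "L p + VV f p q \<le> L q" using L_super[OF pq] .
        moreover have "\<bar>f p\<bar> \<le> \<bar>f q\<bar> + VV f p q" using absdiff(2)[OF pq] .
        moreover have "\<bar>f q\<bar> \<le> ?g q" by (rule G3)
        ultimately show "L p + ?g p \<le> L q + ?g q" using p by linarith
      qed
      ultimately show ?thesis unfolding Inv_def by blast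
    qed
  qed
qed

lemma Inv_all: "Inv a (a + int k)"
proof (induction k)
  case 0
  have "\<forall>q\<ge>a. ncmax f a \<le> L q + ncmax f q" using LT by (simp add: add.commute)
  then show ?case unfolding Inv_def by (intro disjI1 exI[of _ "ncmax f a"]) (simp add: VV_def)
next
  case (Suc k)
  from Inv_step[OF _ Suc] show ?case by (simp add: ac_simps)
qed

lemma W_bound: "VV (ncmax f) a b \<le> TV"
proof (cases "a \<le> b")
  case False then show ?thesis using TV_nonneg by (simp add: VV_def)
next
  case True
  then obtain k where k: "b = a + int k" by (metis zle_iff_zadd)
  have I: "Inv a b" using Inv_all k by simp
  then consider (D) K where "VV (ncmax f) a b \<le> K - ncmax f b" "\<forall>q\<ge>b. K \<le> L q + ncmax f q"
    | (U) m where "m < b" "ncmax f m < ncmax f b" "VV (ncmax f) a b \<le> L m + ncmax f b - ncmax f m"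
    unfolding Inv_def by blast
  then show ?thesis
  proof cases
    case D
    then show ?thesis using LR[of b] R_nonneg[of b] by fastforce
  next
    case U
    then show ?thesis using LR[of m] RT[of m b] by linarith
  qed
qed

end


lemma nnint_sum_indicator:
  fixes \<phi> :: "int \<Rightarrow> ennreal"
  assumes "finite A"
  shows "(\<integral>\<^sup>+n. \<phi> n * indicator A n \<partial>count_space UNIV) = (\<Sum>n\<in>A. \<phi> n)"
  using assms by (simp add: nn_integral_count_space_indicator[symmetric] nn_integral_count_space_finite)

lemma sum_le_nnint:
  fixes \<phi> :: "int \<Rightarrow> ennreal"
  assumes "finite A"
  shows "(\<Sum>n\<in>A. \<phi> n) \<le> (\<integral>\<^sup>+n. \<phi> n \<partial>count_space UNIV)"
proof -
  have "(\<Sum>n\<in>A. \<phi> n) = (\<integral>\<^sup>+n. \<phi> n * indicator A n \<partial>count_space UNIV)"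
    using nnint_sum_indicator[OF assms] by simp
  also have "\<dots> \<le> (\<integral>\<^sup>+n. \<phi> n \<partial>count_space UNIV)"
    by (intro nn_integral_mono) (auto split: split_indicator)
  finally show ?thesis .
qed

lemma nnint_le:
  fixes \<phi> :: "int \<Rightarrow> ennreal"
  assumes B: "\<And>N::nat. (\<Sum>n\<in>{- int N..<int N}. \<phi> n) \<le> B"
  shows "(\<integral>\<^sup>+n. \<phi> n \<partial>count_space UNIV) \<le> B"
proof -
  define F where "F = (\<lambda>N::nat. \<lambda>n. \<phi> n * indicator {- int N..<int N} n)"
  have eq: "\<phi> n = (SUP N. F N n)" for n
  proof (rule antisym)
    have "F (nat \<bar>n\<bar> + 1) n = \<phi> n" unfolding F_def by (auto split: split_indicator)
    then show "\<phi> n \<le> (SUP N. F N n)" by (metis SUP_upper UNIV_I)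
    show "(SUP N. F N n) \<le> \<phi> n" unfolding F_def by (rule SUP_least) (auto split: split_indicator)
  qed
  have inc: "incseq F"
    unfolding F_def incseq_def le_fun_def by (auto split: split_indicator)
  have "(\<integral>\<^sup>+n. \<phi> n \<partial>count_space UNIV) = (\<integral>\<^sup>+n. (SUP N. F N n) \<partial>count_space UNIV)"
    by (subst eq) simp
  also have "\<dots> = (SUP N. integral\<^sup>N (count_space UNIV) (F N))"
    by (rule nn_integral_monotone_convergence_SUP[OF inc]) simp
  also have "\<dots> \<le> B"
    unfolding F_def by (rule SUP_least) (simp add: nnint_sum_indicator B)
  finally show ?thesis .
qed

lemma VV_ennreal: "ennreal (VV \<phi> x y) = (\<Sum>n\<in>{x..<y}. ennreal \<bar>\<phi> (n+1) - \<phi> n\<bar>)"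
  unfolding VV_def by (rule sum_ennreal[symmetric]) simp

lemma VVb_of_Var:
  assumes "Var f < \<infinity>" shows "VV f x y \<le> enn2real (Var f)"
proof -
  have "ennreal (VV f x y) \<le> Var f"
    unfolding VV_ennreal Var_def by (rule sum_le_nnint) simp
  also have "\<dots> = ennreal (enn2real (Var f))" using assms by simp
  finally show ?thesis by (subst (asm) ennreal_le_iff) auto
qed

lemma part1:
  assumes fin: "Var f < \<infinity>" shows "Var (ncmax f) \<le> Var f"
proof -
  let ?TV = "enn2real (Var f)"
  have VVb: "\<And>x y. VV f x y \<le> ?TV" using VVb_of_Var[OF fin] .
  have "Var (ncmax f) \<le> ennreal ?TV"
    unfolding Var_def[of "ncmax f"]
  proof (rule nnint_le)
    fix N :: nat
    show "(\<Sum>n\<in>{- int N..<int N}. ennreal \<bar>ncmax f (n + 1) - ncmax f n\<bar>) \<le> ennreal ?TV"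
      unfolding VV_ennreal[symmetric] using W_bound[OF VVb] by simp
  qed
  also have "\<dots> = Var f" using fin by simp
  finally show ?thesis .
qed

definition f0 :: "int \<Rightarrow> real" where "f0 n = (if n = 0 then 1 else 0)"

lemma Var_f0: "Var f0 = 2"
proof -
  have "Var f0 = (\<Sum>n\<in>{-1,0::int}. ennreal \<bar>f0 (n + 1) - f0 n\<bar>)"
    unfolding Var_def by (rule nn_integral_count_space') (auto simp: f0_def)
  also have "\<dots> = 2" by (simp add: f0_def)
  finally show ?thesis .
qed

lemma sum_f0: "(\<Sum>k=lo..hi. \<bar>f0 k\<bar>) = (if lo \<le> 0 \<and> 0 \<le> hi then 1 else 0)"
proof -
  have "(\<Sum>k=lo..hi. \<bar>f0 k\<bar>) = (\<Sum>k=lo..hi. if k = 0 then 1 else 0)"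
    by (rule sum.cong) (auto simp: f0_def)
  also have "\<dots> = (if lo \<le> 0 \<and> 0 \<le> hi then 1 else 0)" by (simp add: sum.delta)
  finally show ?thesis .
qed

lemma part2: "\<not> (\<exists>C :: real. C < 1 \<and>
              (\<forall>f :: int \<Rightarrow> real. Var f < \<infinity> \<longrightarrow> Var (ncmax f) \<le> ennreal C * Var f))"
proof
  assume "\<exists>C :: real. C < 1 \<and> (\<forall>f :: int \<Rightarrow> real. Var f < \<infinity> \<longrightarrow> Var (ncmax f) \<le> ennreal C * Var f)"
  then obtain C :: real where C: "C < 1" and H0: "\<forall>f :: int \<Rightarrow> real. Var f < \<infinity> \<longrightarrow> Var (ncmax f) \<le> ennreal C * Var f"
    by blast
  have H: "Var (ncmax f0) \<le> ennreal C * 2" using H0[rule_format, of f0] Var_f0 by simp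
  let ?g = "ncmax f0"
  have VVb: "\<And>x y. VV f0 x y \<le> 2" using VVb_of_Var[of f0] Var_f0 by simp
  have g0: "1 \<le> ?g 0" using G3[OF VVb, of 0] by (simp add: f0_def)
  have gN: "?g (int N) \<le> 1 / (real N + 1)" for N :: nat
  proof (rule G2[OF VVb])
    fix lo hi assume lh: "lo \<le> int N" "int N \<le> hi"
    show "avg f0 lo hi \<le> 1 / (real N + 1)"
    proof (cases "lo \<le> 0 \<and> 0 \<le> hi")
      case True
      then have "real N + 1 \<le> real_of_int (hi - lo + 1)" using lh by linarith
      then show ?thesis unfolding avg_def sum_f0 using True by (simp add: frac_le)
    next
      case False then show ?thesis unfolding avg_def sum_f0 using False by auto
    qed
  qed
  have gmN: "?g (- int N) \<le> 1 / (real N + 1)" for N :: nat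
  proof (rule G2[OF VVb])
    fix lo hi assume lh: "lo \<le> - int N" "- int N \<le> hi"
    show "avg f0 lo hi \<le> 1 / (real N + 1)"
    proof (cases "lo \<le> 0 \<and> 0 \<le> hi")
      case True
      then have "real N + 1 \<le> real_of_int (hi - lo + 1)" using lh by linarith
      then show ?thesis unfolding avg_def sum_f0 using True by (simp add: frac_le)
    next
      case False then show ?thesis unfolding avg_def sum_f0 using False by auto
    qed
  qed
  have low: "2 - 2 / (real N + 1) \<le> VV ?g (- int N) (int N)" for N :: nat
  proof -
    have "VV ?g (- int N) 0 + VV ?g 0 (int N) = VV ?g (- int N) (int N)" by (rule VV_concat) auto
    moreover have "\<bar>?g 0 - ?g (- int N)\<bar> \<le> VV ?g (- int N) 0" by (rule VV_tele) simp
    moreover have "\<bar>?g (int N) - ?g 0\<bar> \<le> VV ?g 0 (int N)" by (rule VV_tele) simp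
    moreover have "2 / (real N + 1) = 2 * (1 / (real N + 1))" by simp
    ultimately show ?thesis using g0 gN[of N] gmN[of N] by linarith
  qed
  have up: "VV ?g (- int N) (int N) \<le> max 0 C * 2" for N :: nat
  proof -
    have "ennreal (VV ?g (- int N) (int N)) \<le> Var ?g"
      unfolding VV_ennreal Var_def by (rule sum_le_nnint) simp
    also have "\<dots> \<le> ennreal C * 2" by (rule H)
    also have "\<dots> = ennreal (max 0 C * 2)"
      by (metis ennreal_max_0 ennreal_mult ennreal_numeral max.cobounded1 zero_le_numeral)
    finally show ?thesis by (subst (asm) ennreal_le_iff) auto
  qed
  define N where "N = nat (ceiling (1 / (1 - max 0 C)))"
  have pos: "0 < 1 - max 0 C" using C by simp
  have "1 / (1 - max 0 C) \<le> real N" unfolding N_def by linarith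
  then have "1 / (1 - max 0 C) < real N + 1" by linarith
  then have "1 < (real N + 1) * (1 - max 0 C)" using pos by (simp add: field_simps)
  then have "2 / (real N + 1) < 2 * (1 - max 0 C)" by (simp add: field_simps)
  moreover have "2 * (1 - max 0 C) = 2 - max 0 C * 2" by simp
  ultimately show False using low[of N] up[of N] by linarith
qed

theorem theorem1:
  shows "(\<forall>f :: int \<Rightarrow> real. Var f < \<infinity> \<longrightarrow> Var (ncmax f) \<le> Var f)
       \<and> \<not> (\<exists>C :: real. C < 1 \<and>
              (\<forall>f :: int \<Rightarrow> real. Var f < \<infinity> \<longrightarrow> Var (ncmax f) \<le> ennreal C * Var f))"
  using part1 part2 by blast

end
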